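(* Let $\flat\in\{>,<\}$. For $\imath\in\{1,\dots,2n-1\}$, the set $\{r\in\mathbb Z\mid(\imath,\frac r2)\in\widehat I^{\mathrm{tw},\flat}_\xi\}$ is a $4$-segment if $\imath\ne n$ and a $2$-segment if $\imath=n$. (For $k\in\mathbb Z_{>0}$, a $k$-segment is a set $\{\ell+sk\mid s=0,\dots,N\}$ with $\ell\in\mathbb Z$, $N\in\mathbb Z_{\ge0}$.) Moreover, the following hold in $\Upsilon_{[\mathcal Q^\flat]}$, whose vertices are labelled by $\overline I^{\mathrm{tw},\flat}_\xi$. - (1) Let $i\le n-2$ and suppose $(i,r-2),(i,r+2)\in\overline I^{\mathrm{tw},\flat}_\xi$. Then $(i-1,r),(i+1,r)\in\overline I^{\mathrm{tw},\flat}_\xi$ (ignoring $(0,r)$ when $i=1$). There are arrows from $(i,r-2)$ to these vertices and from them to $(i,r+2)$, and these are all the arrows exiting $(i,r-2)$, respectively entering $(i,r+2)$. - (2) Suppose $(n-1,r-2),(n-1,r+2)\in\overline I^{\mathrm{tw},\flat}_\xi$. Then $(n-2,r),(n,r-1),(n,r+1)\in\overline I^{\mathrm{tw},\flat}_\xi$ (ignoring $(0,r)$ when $n=2$). There are arrows from $(n-1,r-2)$ to $(n-2,r)$ and $(n,r-1)$, and arrows from $(n-2,r)$ and $(n,r+1)$ to $(n-1,r+2)$. These are all the arrows exiting $(n-1,r-2)$, respectively entering $(n-1,r+2)$. - (3) Suppose $(n,r-1),(n,r+1)\in\overline I^{\mathrm{tw},\flat}_\xi$. Then $(n-1,r)\in\overline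 I^{\mathrm{tw},\flat}_\xi$. There are arrows from $(n,r-1)$ to $(n-1,r)$ and from $(n-1,r)$ to $(n,r+1)$, and these are all the arrows exiting $(n,r-1)$, respectively entering $(n,r+1)$.
   Context: Fix $n\ge2$. Let $\mathcal Q$ be a quiver with underlying graph the Dynkin diagram of type $\mathrm A_{2n-2}$ (vertices $1,\dots,2n-2$, edges $\{i,i+1\}$), and $\xi$ a height function: $\xi(j)=\xi(i)+1$ for each arrow $i\to j$. Let $\widehat I_\xi=\{(i,p):1\le i\le 2n-2,\ p\equiv\xi(i)\ \mathrm{mod}\ 2,\ \xi(2n-1-i)-(2n-1)<p\le\xi(i)\}$. This is the vertex set of the Auslander–Reiten quiver $\Gamma_{\mathcal Q}$, whose arrows are $(j,p-1)\to(i,p)$ for all $|i-j|=1$ with both endpoints in $\widehat I_\xi$. Let $\phi(i,p)=(i,p)$ for $i\le n-1$ and $\phi(i,p)=(i+1,p)$ for $i\ge n$. The twisted Auslander–Reiten quiver $\Upsilon_{[\mathcal Q^\flat]}$ ($\flat\in\{>,<\}$) has vertex set $\widehat I^{\mathrm{tw},\flat}_\xi$ consisting of: - $\phi(\widehat I_\xi)$; - a vertex $(n,p-\frac12)$ for each arrow $(j,p-1)\to(i,p)$ of $\Gamma_{\mathcal Q}$ with $\{i,j\}=\{n-1,n\}$; - one extra vertex: $(n,r_M+\frac12)$ if $\flat={>}$, or $(n,r_m-\frac12)$ if $\flat={<}$, where $r_M$, $r_m$ are the max and min of $\{p:(n-1,p)\text{ or }(n,p)\in\widehat I_\xi\}$.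 Its arrows are: - $\phi(j,p-1)\to\phi(i,p)$ for each arrow of $\Gamma_{\mathcal Q}$ with $\{i,j\}\ne\{n-1,n\}$; - $\phi(j,p-1)\to(n,p-\frac12)\to\phi(i,p)$ for each arrow $(j,p-1)\to(i,p)$ of $\Gamma_{\mathcal Q}$ with $\{i,j\}=\{n-1,n\}$; - if $\flat={>}$, the arrow $v_M\to(n,r_M+\frac12)$, where $v_M$ is the unique vertex of $\phi(\widehat I_\xi)$ with first coordinate in $\{n-1,n+1\}$ and second coordinate $r_M$; - if $\flat={<}$, the arrow $(n,r_m-\frac12)\to v_m$, where $v_m$ is the unique vertex of $\phi(\widehat I_\xi)$ with first coordinate in $\{n-1,n+1\}$ and second coordinate $r_m$. Vertices are relabelled by the injective map $(\imath,s)\mapsto(\imath,2s)$ if $\imath\le n$ and $(\imath,s)\mapsto(2n-\imath,2s)$ if $\imath>n$. The image is $\overline I^{\mathrm{tw},\flat}_\xi\subset\{1,\dots,n\}\times\mathbb Z$. *)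

theory Defs
  imports Main
begin

text \<open>Height function: the quiver Q on the Dynkin diagram A_{2n-2} is encoded by its
  height function xi (an arrow i -> j iff xi j = xi i + 1 for adjacent i, j).\<close>

definition is_height :: "nat \<Rightarrow> (nat \<Rightarrow> int) \<Rightarrow> bool" where
  "is_height n \<xi> \<longleftrightarrow> (\<forall>i. 1 \<le> i \<and> i + 1 \<le> 2*n - 2 \<longrightarrow> \<bar>\<xi> (i+1) - \<xi> i\<bar> = 1)"

datatype flat = Gt | Lt

definition Ihat :: "nat \<Rightarrow> (nat \<Rightarrow> int) \<Rightarrow> (nat \<times> int) set" where
  "Ihat n \<xi> = {(i, p). 1 \<le> i \<and> i \<le> 2*n - 2 \<and> even (p - \<xi> i)
      \<and> \<xi> (2*n - 1 - i) - (2 * int n - 1) < p \<and> p \<le> \<xi> i}"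

definition Gamma_arrows :: "nat \<Rightarrow> (nat \<Rightarrow> int) \<Rightarrow> ((nat \<times> int) \<times> (nat \<times> int)) set" where
  "Gamma_arrows n \<xi> = {((j, p - 1), (i, p)) | i j p.
      (j, p - 1) \<in> Ihat n \<xi> \<and> (i, p) \<in> Ihat n \<xi> \<and> (i = j + 1 \<or> j = i + 1)}"

definition phi :: "nat \<Rightarrow> nat \<times> int \<Rightarrow> nat \<times> int" where
  "phi n x = (if fst x \<le> n - 1 then fst x else fst x + 1, snd x)"

text \<open>Vertices of the twisted quiver have half-integer second coordinates; we store a
  vertex (i, s) as (i, 2 s) (doubled second coordinate), via dbl.\<close>
definition dbl :: "nat \<times> int \<Rightarrow> nat \<times> int" where
  "dbl x = (fst x, 2 * snd x)"

definition rM :: "nat \<Rightarrow> (nat \<Rightarrow> int) \<Rightarrow> int" where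
  "rM n \<xi> = Max {p. (n - 1, p) \<in> Ihat n \<xi> \<or> (n, p) \<in> Ihat n \<xi>}"

definition rm :: "nat \<Rightarrow> (nat \<Rightarrow> int) \<Rightarrow> int" where
  "rm n \<xi> = Min {p. (n - 1, p) \<in> Ihat n \<xi> \<or> (n, p) \<in> Ihat n \<xi>}"

definition Itw :: "nat \<Rightarrow> (nat \<Rightarrow> int) \<Rightarrow> flat \<Rightarrow> (nat \<times> int) set" where
  "Itw n \<xi> b =
     (dbl \<circ> phi n) ` Ihat n \<xi>
   \<union> {(n, 2 * p - 1) | i j p. ((j, p - 1), (i, p)) \<in> Gamma_arrows n \<xi> \<and> {i, j} = {n - 1, n}}
   \<union> {if b = Gt then (n, 2 * rM n \<xi> + 1) else (n, 2 * rm n \<xi> - 1)}"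

definition Tw_arrows :: "nat \<Rightarrow> (nat \<Rightarrow> int) \<Rightarrow> flat \<Rightarrow> ((nat \<times> int) \<times> (nat \<times> int)) set" where
  "Tw_arrows n \<xi> b =
     {(dbl (phi n (j, p - 1)), dbl (phi n (i, p))) | i j p.
        ((j, p - 1), (i, p)) \<in> Gamma_arrows n \<xi> \<and> {i, j} \<noteq> {n - 1, n}}
   \<union> {(dbl (phi n (j, p - 1)), (n, 2 * p - 1)) | i j p.
        ((j, p - 1), (i, p)) \<in> Gamma_arrows n \<xi> \<and> {i, j} = {n - 1, n}}
   \<union> {((n, 2 * p - 1), dbl (phi n (i, p))) | i j p.
        ((j, p - 1), (i, p)) \<in> Gamma_arrows n \<xi> \<and> {i, j} = {n - 1, n}}
   \<union> (if b = Gt then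
        {(v, (n, 2 * rM n \<xi> + 1)) | v. v \<in> (dbl \<circ> phi n) ` Ihat n \<xi>
            \<and> fst v \<in> {n - 1, n + 1} \<and> snd v = 2 * rM n \<xi>}
      else
        {((n, 2 * rm n \<xi> - 1), v) | v. v \<in> (dbl \<circ> phi n) ` Ihat n \<xi>
            \<and> fst v \<in> {n - 1, n + 1} \<and> snd v = 2 * rm n \<xi>})"

definition relabel :: "nat \<Rightarrow> nat \<times> int \<Rightarrow> nat \<times> int" where
  "relabel n x = (if fst x \<le> n then fst x else 2 * n - fst x, snd x)"

definition Ibar :: "nat \<Rightarrow> (nat \<Rightarrow> int) \<Rightarrow> flat \<Rightarrow> (nat \<times> int) set" where
  "Ibar n \<xi> b = relabel n ` Itw n \<xi> b"

definition Abar :: "nat \<Rightarrow> (nat \<Rightarrow> int) \<Rightarrow> flat \<Rightarrow> ((nat \<times> int) \<times> (nat \<times> int)) set" where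
  "Abar n \<xi> b = map_prod (relabel n) (relabel n) ` Tw_arrows n \<xi> b"

definition is_segment :: "int \<Rightarrow> int set \<Rightarrow> bool" where
  "is_segment k S \<longleftrightarrow> (\<exists>l (N::nat). S = {l + int s * k | s. s \<le> N})"

end

theory Submission
  imports Defs
begin

locale L =
  fixes n :: nat and \<xi> :: "nat \<Rightarrow> int"
  assumes n2: "n \<ge> 2" and ht: "is_height n \<xi>"
begin

lemma step: "1 \<le> i \<Longrightarrow> i + 1 \<le> 2*n-2 \<Longrightarrow> \<xi> (i+1) = \<xi> i + 1 \<or> \<xi> (i+1) = \<xi> i - 1"
proof -
  assume "1 \<le> i" "i + 1 \<le> 2*n-2"
  then have "\<bar>\<xi> (i+1) - \<xi> i\<bar> = 1" using ht unfolding is_height_def by blast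
  then show ?thesis by arith
qed

lemma lip_k: "1 \<le> i \<Longrightarrow> i + k \<le> 2*n-2 \<Longrightarrow> \<bar>\<xi> (i+k) - \<xi> i\<bar> \<le> int k \<and> even (\<xi> (i+k) - \<xi> i + int k)"
proof (induction k)
  case 0 then show ?case by simp
next
  case (Suc k)
  then have IH: "\<bar>\<xi> (i+k) - \<xi> i\<bar> \<le> int k \<and> even (\<xi> (i+k) - \<xi> i + int k)" by simp
  have "\<xi> (i+k+1) = \<xi> (i+k) + 1 \<or> \<xi> (i+k+1) = \<xi> (i+k) - 1"
    using step[of "i+k"] Suc.prems by simp
  then show ?case using IH by (auto simp: algebra_simps) presburger+
qed

lemma lip: "1 \<le> i \<Longrightarrow> 1 \<le> j \<Longrightarrow> i \<le> 2*n-2 \<Longrightarrow> j \<le> 2*n-2 \<Longrightarrow>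
   \<bar>\<xi> j - \<xi> i\<bar> \<le> \<bar>int j - int i\<bar> \<and> even (\<xi> j - \<xi> i + int j - int i)"
proof (cases "i \<le> j")
  case True
  assume a: "1 \<le> i" "1 \<le> j" "i \<le> 2*n-2" "j \<le> 2*n-2"
  have "j = i + (j - i)" using True by simp
  then show ?thesis using lip_k[of i "j-i"] a True by (metis abs_of_nonneg add_diff_cancel_left' diff_ge_0_iff_ge of_nat_diff of_nat_le_iff add_diff_eq)
next
  case False
  assume a: "1 \<le> i" "1 \<le> j" "i \<le> 2*n-2" "j \<le> 2*n-2"
  have "i = j + (i - j)" using False by simp
  then have "\<bar>\<xi> i - \<xi> j\<bar> \<le> int (i-j) \<and> even (\<xi> i - \<xi> j + int (i-j))"
    using lip_k[of j "i-j"] a by metis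
  then show ?thesis using False by (auto simp: of_nat_diff abs_minus_commute)
qed

lemma dual: "1 \<le> i \<Longrightarrow> i \<le> 2*n-2 \<Longrightarrow> odd (\<xi> (2*n-1-i) - \<xi> i) \<and> \<bar>\<xi> (2*n-1-i) - \<xi> i\<bar> \<le> 2*int n - 3"
proof -
  assume a: "1 \<le> i" "i \<le> 2*n-2"
  have "\<bar>\<xi> (2*n-1-i) - \<xi> i\<bar> \<le> \<bar>int (2*n-1-i) - int i\<bar> \<and> even (\<xi> (2*n-1-i) - \<xi> i + int (2*n-1-i) - int i)"
    using lip[of i "2*n-1-i"] a by simp
  moreover have "int (2*n-1-i) = 2 * int n - 1 - int i" using a by simp
  ultimately show ?thesis using a by auto
qed

lemma Ihat_iff: "(i, p) \<in> Ihat n \<xi> \<longleftrightarrow> 1 \<le> i \<and> i \<le> 2*n - 2 \<and> even (p - \<xi> i)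
      \<and> \<xi> (2*n - 1 - i) - (2 * int n - 1) < p \<and> p \<le> \<xi> i"
  by (simp add: Ihat_def)

lemma mesh_up: "(i, p - 1) \<in> Ihat n \<xi> \<Longrightarrow> (i, p + 1) \<in> Ihat n \<xi> \<Longrightarrow> i + 1 \<le> 2*n-2 \<Longrightarrow> (i+1, p) \<in> Ihat n \<xi>"
proof -
  assume a: "(i, p - 1) \<in> Ihat n \<xi>" "(i, p + 1) \<in> Ihat n \<xi>" "i + 1 \<le> 2*n-2"
  then have b: "1 \<le> i" "even (p - 1 - \<xi> i)" "\<xi> (2*n - 1 - i) - (2 * int n - 1) < p - 1" "p + 1 \<le> \<xi> i"
    by (auto simp: Ihat_iff)
  have s1: "\<xi> (i+1) = \<xi> i + 1 \<or> \<xi> (i+1) = \<xi> i - 1" using step a b by simp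
  have e: "2*n-1-i = (2*n-1-(i+1)) + 1" using a by simp
  have s2: "\<xi> (2*n-1-i) = \<xi> (2*n-1-(i+1)) + 1 \<or> \<xi> (2*n-1-i) = \<xi> (2*n-1-(i+1)) - 1"
    using step[of "2*n-1-(i+1)"] a b e by simp
  show ?thesis using b s1 s2 a unfolding Ihat_iff by auto
qed

lemma mesh_dn: "(i, p - 1) \<in> Ihat n \<xi> \<Longrightarrow> (i, p + 1) \<in> Ihat n \<xi> \<Longrightarrow> 2 \<le> i \<Longrightarrow> (i-1, p) \<in> Ihat n \<xi>"
proof -
  assume a: "(i, p - 1) \<in> Ihat n \<xi>" "(i, p + 1) \<in> Ihat n \<xi>" "2 \<le> i"
  then have b: "i \<le> 2*n-2" "even (p - 1 - \<xi> i)" "\<xi> (2*n - 1 - i) - (2 * int n - 1) < p - 1" "p + 1 \<le> \<xi> i"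
    by (auto simp: Ihat_iff)
  have e0: "i = (i - 1) + 1" using a by simp
  have s1: "\<xi> i = \<xi> (i-1) + 1 \<or> \<xi> i = \<xi> (i-1) - 1" using step[of "i-1"] a b e0 by simp
  have e: "2*n-1-(i-1) = (2*n-1-i) + 1" using a b by simp
  have s2: "\<xi> (2*n-1-(i-1)) = \<xi> (2*n-1-i) + 1 \<or> \<xi> (2*n-1-(i-1)) = \<xi> (2*n-1-i) - 1"
    using step[of "2*n-1-i"] a b e by simp
  show ?thesis using b s1 s2 a unfolding Ihat_iff by auto
qed

definition M where "M = max (\<xi> (n-1)) (\<xi> n)"

lemma xn: "\<xi> n = \<xi> (n-1) + 1 \<or> \<xi> n = \<xi> (n-1) - 1"
  using step[of "n-1"] n2 by simp

lemma d1: "2*n-1-(n-1) = n" "2*n-1-n = n-1" using n2 by auto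

lemma arithS: fixes a c m p :: int
  assumes "c = a+1 \<or> c = a-1"
  shows "((even(p-a) \<and> c - (2*m-1) < p \<and> p \<le> a) \<or> (even(p-c) \<and> a - (2*m-1) < p \<and> p \<le> c)) \<longleftrightarrow> max a c - (2*m-2) \<le> p \<and> p \<le> max a c"
  using assms by (cases "c = a+1") (simp_all add: max_def; presburger)+

lemma arithA: fixes a c m p :: int
  assumes "c = a+1 \<or> c = a-1" "max a c - (2*m-2) \<le> p" "p \<le> max a c"
  shows "(even(p-a) \<and> c - (2*m-1) < p \<and> p \<le> a) \<longleftrightarrow> even(p-a)"
    "(even(p-c) \<and> a - (2*m-1) < p \<and> p \<le> c) \<longleftrightarrow> odd(p-a)"
  using assms by (cases "c = a+1"; simp add: max_def; presburger)+

lemma rowN1: "(n-1,p) \<in> Ihat n \<xi> \<longleftrightarrow> even (p - \<xi> (n-1)) \<and> \<xi> n - (2*int n - 1) < p \<and> p \<le> \<xi> (n-1)"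
  unfolding Ihat_iff d1 using n2 by auto
lemma rowN: "(n,p) \<in> Ihat n \<xi> \<longleftrightarrow> even (p - \<xi> n) \<and> \<xi> (n-1) - (2*int n - 1) < p \<and> p \<le> \<xi> n"
  unfolding Ihat_iff d1 using n2 by auto

lemma S_iff: "((n-1,p) \<in> Ihat n \<xi> \<or> (n,p) \<in> Ihat n \<xi>) \<longleftrightarrow> M - (2*int n - 2) \<le> p \<and> p \<le> M"
  unfolding rowN1 rowN M_def using arithS[OF xn] by blast

lemma rowA: "M - (2*int n - 2) \<le> p \<Longrightarrow> p \<le> M \<Longrightarrow> (n-1,p) \<in> Ihat n \<xi> \<longleftrightarrow> even (p - \<xi> (n-1))"
  unfolding rowN1 M_def using arithA(1)[OF xn] by blast

lemma rowB: "M - (2*int n - 2) \<le> p \<Longrightarrow> p \<le> M \<Longrightarrow> (n,p) \<in> Ihat n \<xi> \<longleftrightarrow> odd (p - \<xi> (n-1))"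
  unfolding rowN M_def using arithA(2)[OF xn] by blast

lemma Sset: "{p. (n - 1, p) \<in> Ihat n \<xi> \<or> (n, p) \<in> Ihat n \<xi>} = {M - (2*int n - 2)..M}"
  by (intro set_eqI) (simp only: mem_Collect_eq atLeastAtMost_iff S_iff)

lemma rM_eq: "rM n \<xi> = M"
  unfolding rM_def Sset using n2 by (intro Max_eqI) auto

lemma rm_eq: "rm n \<xi> = M - (2*int n - 2)"
  unfolding rm_def Sset using n2 by (intro Min_eqI) auto

lemma Gamma_iff: "((x, y) \<in> Gamma_arrows n \<xi>) \<longleftrightarrow> snd x = snd y - 1 \<and> x \<in> Ihat n \<xi> \<and> y \<in> Ihat n \<xi> \<and> (fst y = fst x + 1 \<or> fst x = fst y + 1)"
  unfolding Gamma_arrows_def by (cases x; cases y) auto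

lemma pair_eq: "({i, j} = {n - 1, n}) \<longleftrightarrow> (i = n - 1 \<and> j = n) \<or> (i = n \<and> j = n - 1)"
  using n2 by (auto simp: doubleton_eq_iff)

lemma Sp: "(\<exists>i j. ((j, p - 1), (i, p)) \<in> Gamma_arrows n \<xi> \<and> {i, j} = {n - 1, n}) \<longleftrightarrow> rm n \<xi> + 1 \<le> p \<and> p \<le> rM n \<xi>"
proof
  assume "\<exists>i j. ((j, p - 1), (i, p)) \<in> Gamma_arrows n \<xi> \<and> {i, j} = {n - 1, n}"
  then obtain i j where "((j, p - 1), (i, p)) \<in> Gamma_arrows n \<xi>" "{i, j} = {n - 1, n}" by blast
  then have "(j,p-1) \<in> Ihat n \<xi>" "(i,p) \<in> Ihat n \<xi>" "j \<in> {n-1,n}" "i \<in> {n-1,n}"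
    unfolding Gamma_iff pair_eq by auto
  then have "M - (2*int n - 2) \<le> p - 1" "p \<le> M" using S_iff[of "p-1"] S_iff[of p] by auto
  then show "rm n \<xi> + 1 \<le> p \<and> p \<le> rM n \<xi>" unfolding rm_eq rM_eq by simp
next
  assume a: "rm n \<xi> + 1 \<le> p \<and> p \<le> rM n \<xi>"
  then have r: "M - (2*int n - 2) \<le> p - 1" "p \<le> M" unfolding rm_eq rM_eq by auto
  show "\<exists>i j. ((j, p - 1), (i, p)) \<in> Gamma_arrows n \<xi> \<and> {i, j} = {n - 1, n}"
  proof (cases "even (p - \<xi> (n-1))")
    case True
    then have "(n-1,p) \<in> Ihat n \<xi>" "(n,p-1) \<in> Ihat n \<xi>" using rowA rowB r by auto
    then show ?thesis using n2 unfolding Gamma_iff pair_eq by (intro exI[of _ "n-1"] exI[of _ n]) auto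
  next
    case False
    then have "(n,p) \<in> Ihat n \<xi>" "(n-1,p-1) \<in> Ihat n \<xi>" using rowA rowB r by auto
    then show ?thesis using n2 unfolding Gamma_iff pair_eq by (intro exI[of _ n] exI[of _ "n-1"]) auto
  qed
qed

definition rho where "rho j = (if j \<le> n-1 then j else 2*n-1-j)"

lemma rel_phi: "j \<le> 2*n-2 \<Longrightarrow> relabel n (dbl (phi n (j,q))) = (rho j, 2*q)"
  using n2 unfolding relabel_def dbl_def phi_def rho_def by auto

lemma rho_n: "rho (n-1) = n-1" "rho n = n-1" using n2 unfolding rho_def by auto

lemma rel_n: "relabel n (n, s) = (n, s)" unfolding relabel_def by simp

definition E where "E b = (if b = Gt then 2 * rM n \<xi> + 1 else 2 * rm n \<xi> - 1)"

lemma Itw_iff: "(a, s) \<in> Itw n \<xi> b \<longleftrightarrow> (\<exists>j q. (j,q) \<in> Ihat n \<xi> \<and> (a,s) = dbl (phi n (j,q)))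
   \<or> (a = n \<and> (\<exists>p. rm n \<xi> + 1 \<le> p \<and> p \<le> rM n \<xi> \<and> s = 2*p-1)) \<or> (a = n \<and> s = E b)"
proof -
  have mid: "(a,s) \<in> {(n, 2 * p - 1) | i j p. ((j, p - 1), (i, p)) \<in> Gamma_arrows n \<xi> \<and> {i, j} = {n - 1, n}}
     \<longleftrightarrow> (a = n \<and> (\<exists>p. rm n \<xi> + 1 \<le> p \<and> p \<le> rM n \<xi> \<and> s = 2*p-1))"
    using Sp by blast
  show ?thesis unfolding Itw_def Un_iff mid E_def by (cases b) auto
qed

lemma Ihat_range: "(j,q) \<in> Ihat n \<xi> \<Longrightarrow> 1 \<le> j \<and> j \<le> 2*n-2" by (simp add: Ihat_iff)

lemma Ibar_iff: "(a, s) \<in> Ibar n \<xi> b \<longleftrightarrow> (\<exists>j q. (j,q) \<in> Ihat n \<xi> \<and> a = rho j \<and> s = 2*q)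
   \<or> (a = n \<and> (\<exists>p. rm n \<xi> + 1 \<le> p \<and> p \<le> rM n \<xi> \<and> s = 2*p-1)) \<or> (a = n \<and> s = E b)"
proof
  assume "(a, s) \<in> Ibar n \<xi> b"
  then obtain x where x: "x \<in> Itw n \<xi> b" "(a,s) = relabel n x" unfolding Ibar_def by auto
  obtain a' s' where xe: "x = (a',s')" by (cases x)
  show "(\<exists>j q. (j,q) \<in> Ihat n \<xi> \<and> a = rho j \<and> s = 2*q)
   \<or> (a = n \<and> (\<exists>p. rm n \<xi> + 1 \<le> p \<and> p \<le> rM n \<xi> \<and> s = 2*p-1)) \<or> (a = n \<and> s = E b)"
    using x(1) unfolding xe Itw_iff
  proof (elim disjE exE conjE)
    fix j q assume "(j,q) \<in> Ihat n \<xi>" "(a', s') = dbl (phi n (j, q))"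
    then show ?thesis using x(2) xe rel_phi[of j q] Ihat_range by auto
  qed (use x(2) xe rel_n in auto)
next
  assume "(\<exists>j q. (j,q) \<in> Ihat n \<xi> \<and> a = rho j \<and> s = 2*q)
   \<or> (a = n \<and> (\<exists>p. rm n \<xi> + 1 \<le> p \<and> p \<le> rM n \<xi> \<and> s = 2*p-1)) \<or> (a = n \<and> s = E b)"
  then show "(a, s) \<in> Ibar n \<xi> b"
  proof (elim disjE exE conjE)
    fix j q assume h: "(j,q) \<in> Ihat n \<xi>" "a = rho j" "s = 2*q"
    have "dbl (phi n (j,q)) \<in> Itw n \<xi> b" using h(1) unfolding Itw_def by auto
    then show ?thesis unfolding Ibar_def using h rel_phi[of j q] Ihat_range[OF h(1)] by (metis image_eqI)
  next
    fix p assume "a = n" "rm n \<xi> + 1 \<le> p" "p \<le> rM n \<xi>" "s = 2*p-1"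
    then have "(n, s) \<in> Itw n \<xi> b" unfolding Itw_iff by auto
    then show ?thesis unfolding Ibar_def using rel_n \<open>a = n\<close> by (metis image_eqI)
  next
    assume "a = n" "s = E b"
    then have "(n, s) \<in> Itw n \<xi> b" unfolding Itw_iff by auto
    then show ?thesis unfolding Ibar_def using rel_n \<open>a = n\<close> by (metis image_eqI)
  qed
qed

definition ArrR where "ArrR b u w \<longleftrightarrow>
   (\<exists>j i q. (j,q) \<in> Ihat n \<xi> \<and> (i,q+1) \<in> Ihat n \<xi> \<and> (i = j+1 \<or> j = i+1) \<and> \<not> ({i,j} = {n-1,n})
        \<and> u = (rho j, 2*q) \<and> w = (rho i, 2*q+2))
 \<or> (\<exists>p. rm n \<xi> + 1 \<le> p \<and> p \<le> rM n \<xi> \<and> u = (n-1, 2*p-2) \<and> w = (n, 2*p-1))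
 \<or> (\<exists>p. rm n \<xi> + 1 \<le> p \<and> p \<le> rM n \<xi> \<and> u = (n, 2*p-1) \<and> w = (n-1, 2*p))
 \<or> (b = Gt \<and> u = (n-1, 2 * rM n \<xi>) \<and> w = (n, 2 * rM n \<xi> + 1))
 \<or> (b = Lt \<and> u = (n, 2 * rm n \<xi> - 1) \<and> w = (n-1, 2 * rm n \<xi>))"

lemma rel_side: "v \<in> (dbl \<circ> phi n) ` Ihat n \<xi> \<Longrightarrow> fst v \<in> {n - 1, n + 1} \<Longrightarrow> relabel n v = (n-1, snd v)"
  unfolding relabel_def using n2 by (cases v) auto

lemma Abar_D: "(u, w) \<in> Abar n \<xi> b \<Longrightarrow> ArrR b u w"
proof -
  assume "(u, w) \<in> Abar n \<xi> b"
  then obtain x y where xy: "(x,y) \<in> Tw_arrows n \<xi> b" "u = relabel n x" "w = relabel n y"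
    unfolding Abar_def by auto
  show ?thesis using xy(1) unfolding Tw_arrows_def Un_iff
  proof (elim disjE)
    assume "(x, y) \<in> {(dbl (phi n (j, p - 1)), dbl (phi n (i, p))) |i j p.
        ((j, p - 1), i, p) \<in> Gamma_arrows n \<xi> \<and> {i, j} \<noteq> {n - 1, n}}"
    then obtain i j p where h: "((j, p - 1), i, p) \<in> Gamma_arrows n \<xi>" "{i, j} \<noteq> {n - 1, n}"
       "x = dbl (phi n (j, p - 1))" "y = dbl (phi n (i, p))" by blast
    have h2: "(j,p-1) \<in> Ihat n \<xi>" "(i,p) \<in> Ihat n \<xi>" "i = j+1 \<or> j = i+1" using h(1) unfolding Gamma_iff by auto
    then have "u = (rho j, 2*(p-1))" "w = (rho i, 2*(p-1)+2)"
      using xy h rel_phi Ihat_range by auto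
    then show ?thesis unfolding ArrR_def using h h2 by (intro disjI1 exI[of _ j] exI[of _ i] exI[of _ "p-1"]) auto
  next
    assume "(x, y) \<in> {(dbl (phi n (j, p - 1)), (n, 2 * p - 1)) |i j p.
        ((j, p - 1), i, p) \<in> Gamma_arrows n \<xi> \<and> {i, j} = {n - 1, n}}"
    then obtain i j p where h: "((j, p - 1), i, p) \<in> Gamma_arrows n \<xi>" "{i, j} = {n - 1, n}"
       "x = dbl (phi n (j, p - 1))" "y = (n, 2*p-1)" by blast
    have r: "rm n \<xi> + 1 \<le> p \<and> p \<le> rM n \<xi>" using Sp h by blast
    have "j \<in> {n-1,n}" using h(2) pair_eq by auto
    then have "u = (n-1, 2*p-2)" using xy h rel_phi rho_n n2 by auto
    then show ?thesis unfolding ArrR_def using r h xy rel_n by auto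
  next
    assume "(x, y) \<in> {((n, 2 * p - 1), dbl (phi n (i, p))) |i j p.
        ((j, p - 1), i, p) \<in> Gamma_arrows n \<xi> \<and> {i, j} = {n - 1, n}}"
    then obtain i j p where h: "((j, p - 1), i, p) \<in> Gamma_arrows n \<xi>" "{i, j} = {n - 1, n}"
       "x = (n, 2*p-1)" "y = dbl (phi n (i, p))" by blast
    have r: "rm n \<xi> + 1 \<le> p \<and> p \<le> rM n \<xi>" using Sp h by blast
    have "i \<in> {n-1,n}" using h(2) pair_eq by auto
    then have "w = (n-1, 2*p)" using xy h rel_phi rho_n n2 by auto
    then show ?thesis unfolding ArrR_def using r h xy rel_n by auto
  next
    assume a: "(x, y) \<in> (if b = Gt then {(v, n, 2 * rM n \<xi> + 1) |v. v \<in> (dbl \<circ> phi n) ` Ihat n \<xi> \<and> fst v \<in> {n - 1, n + 1} \<and> snd v = 2 * rM n \<xi>}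
     else {((n, 2 * rm n \<xi> - 1), v) |v. v \<in> (dbl \<circ> phi n) ` Ihat n \<xi> \<and> fst v \<in> {n - 1, n + 1} \<and> snd v = 2 * rm n \<xi>})"
    show ?thesis
    proof (cases b)
      case Gt
      then have "(x, y) \<in> {(v, n, 2 * rM n \<xi> + 1) |v. v \<in> (dbl \<circ> phi n) ` Ihat n \<xi> \<and> fst v \<in> {n - 1, n + 1} \<and> snd v = 2 * rM n \<xi>}"
        using a by simp
      then obtain v where "x = v" "y = (n, 2 * rM n \<xi> + 1)" "v \<in> (dbl \<circ> phi n) ` Ihat n \<xi>" "fst v \<in> {n - 1, n + 1}" "snd v = 2 * rM n \<xi>"
        by blast
      then show ?thesis unfolding ArrR_def using Gt xy rel_side rel_n by auto
    next
      case Lt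
      then have "(x, y) \<in> {((n, 2 * rm n \<xi> - 1), v) |v. v \<in> (dbl \<circ> phi n) ` Ihat n \<xi> \<and> fst v \<in> {n - 1, n + 1} \<and> snd v = 2 * rm n \<xi>}"
        using a by simp
      then obtain v where "y = v" "x = (n, 2 * rm n \<xi> - 1)" "v \<in> (dbl \<circ> phi n) ` Ihat n \<xi>" "fst v \<in> {n - 1, n + 1}" "snd v = 2 * rm n \<xi>"
        by blast
      then show ?thesis unfolding ArrR_def using Lt xy rel_side rel_n by auto
    qed
  qed
qed

lemma rMS: "(n-1, rM n \<xi>) \<in> Ihat n \<xi> \<or> (n, rM n \<xi>) \<in> Ihat n \<xi>"
  using S_iff[of "rM n \<xi>"] unfolding rM_eq using n2 by auto

lemma rmS: "(n-1, rm n \<xi>) \<in> Ihat n \<xi> \<or> (n, rm n \<xi>) \<in> Ihat n \<xi>"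
  using S_iff[of "rm n \<xi>"] unfolding rm_eq using n2 by auto

lemma side_v: "(k, q) \<in> Ihat n \<xi> \<Longrightarrow> k \<in> {n-1, n} \<Longrightarrow>
   dbl (phi n (k,q)) \<in> (dbl \<circ> phi n) ` Ihat n \<xi> \<and> fst (dbl (phi n (k,q))) \<in> {n - 1, n + 1} \<and> snd (dbl (phi n (k,q))) = 2*q
   \<and> relabel n (dbl (phi n (k,q))) = (n-1, 2*q)"
proof -
  assume a: "(k, q) \<in> Ihat n \<xi>" "k \<in> {n-1, n}"
  have "dbl (phi n (k,q)) \<in> (dbl \<circ> phi n) ` Ihat n \<xi>" by (rule image_eqI[OF _ a(1)]) simp
  then show ?thesis using a n2 unfolding dbl_def phi_def relabel_def by auto
qed

lemma Abar_I: "ArrR b u w \<Longrightarrow> (u, w) \<in> Abar n \<xi> b"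
proof -
  assume "ArrR b u w"
  then consider (c1) j i q where "(j,q) \<in> Ihat n \<xi>" "(i,q+1) \<in> Ihat n \<xi>" "i = j+1 \<or> j = i+1" "\<not> ({i,j} = {n-1,n})"
        "u = (rho j, 2*q)" "w = (rho i, 2*q+2)"
    | (c2) p where "rm n \<xi> + 1 \<le> p" "p \<le> rM n \<xi>" "u = (n-1, 2*p-2)" "w = (n, 2*p-1)"
    | (c3) p where "rm n \<xi> + 1 \<le> p" "p \<le> rM n \<xi>" "u = (n, 2*p-1)" "w = (n-1, 2*p)"
    | (c4) "b = Gt" "u = (n-1, 2 * rM n \<xi>)" "w = (n, 2 * rM n \<xi> + 1)"
    | (c5) "b = Lt" "u = (n, 2 * rm n \<xi> - 1)" "w = (n-1, 2 * rm n \<xi>)"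
    unfolding ArrR_def by blast
  then show ?thesis
  proof cases
  case c1
  note h = c1
  have g: "((j, (q+1) - 1), (i, q+1)) \<in> Gamma_arrows n \<xi>" using h unfolding Gamma_iff by auto
  have "(dbl (phi n (j, (q+1) - 1)), dbl (phi n (i, q+1))) \<in> Tw_arrows n \<xi> b"
    unfolding Tw_arrows_def using g h(4) by blast
  moreover have "map_prod (relabel n) (relabel n) (dbl (phi n (j, (q+1) - 1)), dbl (phi n (i, q+1))) = (u, w)"
    using h rel_phi Ihat_range by auto
  ultimately show ?thesis unfolding Abar_def by (metis image_eqI)
next
  case c2 note h = c2
  then obtain i j where g: "((j, p - 1), (i, p)) \<in> Gamma_arrows n \<xi>" "{i, j} = {n - 1, n}" using Sp by blast
  have "(dbl (phi n (j, p - 1)), (n, 2*p-1)) \<in> Tw_arrows n \<xi> b"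
    unfolding Tw_arrows_def using g by blast
  moreover have "j \<in> {n-1,n}" "(j, p-1) \<in> Ihat n \<xi>" using g pair_eq Gamma_iff by auto
  then have "map_prod (relabel n) (relabel n) (dbl (phi n (j, p - 1)), (n, 2*p-1)) = (u, w)"
    using h rel_phi rho_n rel_n Ihat_range by auto
  ultimately show ?thesis unfolding Abar_def by (metis image_eqI)
next
  case c3 note h = c3
  then obtain i j where g: "((j, p - 1), (i, p)) \<in> Gamma_arrows n \<xi>" "{i, j} = {n - 1, n}" using Sp by blast
  have "((n, 2*p-1), dbl (phi n (i, p))) \<in> Tw_arrows n \<xi> b"
    unfolding Tw_arrows_def using g by blast
  moreover have "i \<in> {n-1,n}" "(i, p) \<in> Ihat n \<xi>" using g pair_eq Gamma_iff by auto
  then have "map_prod (relabel n) (relabel n) ((n, 2*p-1), dbl (phi n (i, p))) = (u, w)"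
    using h rel_phi rho_n rel_n Ihat_range by auto
  ultimately show ?thesis unfolding Abar_def by (metis image_eqI)
next
  case c4 note h = c4
  obtain k where k: "(k, rM n \<xi>) \<in> Ihat n \<xi>" "k \<in> {n-1,n}" using rMS by blast
  note sv = side_v[OF k]
  have m: "(dbl (phi n (k, rM n \<xi>)), (n, 2 * rM n \<xi> + 1)) \<in> {(v, n, 2 * rM n \<xi> + 1) |v. v \<in> (dbl \<circ> phi n) ` Ihat n \<xi> \<and> fst v \<in> {n - 1, n + 1} \<and> snd v = 2 * rM n \<xi>}"
    using sv by blast
  have "(dbl (phi n (k, rM n \<xi>)), (n, 2 * rM n \<xi> + 1)) \<in> Tw_arrows n \<xi> b"
    unfolding Tw_arrows_def by (rule UnI2) (simp only: h(1) simp_thms if_True, rule m)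
  moreover have "map_prod (relabel n) (relabel n) (dbl (phi n (k, rM n \<xi>)), (n, 2 * rM n \<xi> + 1)) = (u, w)"
    using h sv rel_n by auto
  ultimately show ?thesis unfolding Abar_def by (metis image_eqI)
next
  case c5 note h = c5
  obtain k where k: "(k, rm n \<xi>) \<in> Ihat n \<xi>" "k \<in> {n-1,n}" using rmS by blast
  note sv = side_v[OF k]
  have m: "((n, 2 * rm n \<xi> - 1), dbl (phi n (k, rm n \<xi>))) \<in> {((n, 2 * rm n \<xi> - 1), v) |v. v \<in> (dbl \<circ> phi n) ` Ihat n \<xi> \<and> fst v \<in> {n - 1, n + 1} \<and> snd v = 2 * rm n \<xi>}"
    using sv by blast
  have "((n, 2 * rm n \<xi> - 1), dbl (phi n (k, rm n \<xi>))) \<in> Tw_arrows n \<xi> b"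
    unfolding Tw_arrows_def by (rule UnI2) (simp only: h(1) flat.distinct if_False, rule m)
  moreover have "map_prod (relabel n) (relabel n) ((n, 2 * rm n \<xi> - 1), dbl (phi n (k, rm n \<xi>))) = (u, w)"
    using h sv rel_n by auto
  ultimately show ?thesis unfolding Abar_def by (metis image_eqI)
  qed
qed

lemma Abar_iff: "(u, w) \<in> Abar n \<xi> b \<longleftrightarrow> ArrR b u w" using Abar_D Abar_I by blast

lemma seg4: "lo \<le> hi \<Longrightarrow> even (hi - lo) \<Longrightarrow> is_segment 4 {r. \<exists>q. r = 2*q \<and> even (q - hi) \<and> lo \<le> q \<and> q \<le> hi}"
proof -
  assume a: "lo \<le> hi" "even (hi - lo)"
  define N where "N = nat ((hi - lo) div 2)"
  have "{r. \<exists>q. r = 2*q \<and> even (q - hi) \<and> lo \<le> q \<and> q \<le> hi} = {2*lo + int s * 4 | s. s \<le> N}"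
  proof (intro set_eqI iffI)
    fix r assume "r \<in> {r. \<exists>q. r = 2*q \<and> even (q - hi) \<and> lo \<le> q \<and> q \<le> hi}"
    then obtain q where q: "r = 2*q" "even (q - hi)" "lo \<le> q" "q \<le> hi" by auto
    define t where "t = (q - lo) div 2"
    have t: "q = lo + 2*t" "t \<ge> 0" "t \<le> (hi - lo) div 2" using q a unfolding t_def by presburger+
    show "r \<in> {2*lo + int s * 4 | s. s \<le> N}"
      using t q unfolding N_def by (intro CollectI exI[of _ "nat t"]) auto
  next
    fix r assume "r \<in> {2*lo + int s * 4 | s. s \<le> N}"
    then obtain s where s: "r = 2*lo + int s * 4" "s \<le> N" by auto
    have "int s \<le> (hi - lo) div 2" using s(2) a unfolding N_def by auto
    then show "r \<in> {r. \<exists>q. r = 2*q \<and> even (q - hi) \<and> lo \<le> q \<and> q \<le> hi}"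
      using s a by (intro CollectI exI[of _ "lo + 2 * int s"]) presburger
  qed
  then show ?thesis unfolding is_segment_def by blast
qed

lemma seg2: "lo \<le> hi \<Longrightarrow> is_segment 2 {r. \<exists>p. lo \<le> p \<and> p \<le> hi \<and> r = 2*p-1}"
proof -
  assume a: "lo \<le> hi"
  have "{r. \<exists>p. lo \<le> p \<and> p \<le> hi \<and> r = 2*p-1} = {(2*lo-1) + int s * 2 | s. s \<le> nat (hi - lo)}"
  proof (intro set_eqI iffI)
    fix r assume "r \<in> {r. \<exists>p. lo \<le> p \<and> p \<le> hi \<and> r = 2*p-1}"
    then obtain p where p: "lo \<le> p" "p \<le> hi" "r = 2*p-1" by auto
    show "r \<in> {(2*lo-1) + int s * 2 | s. s \<le> nat (hi - lo)}"
      using p by (intro CollectI exI[of _ "nat (p - lo)"]) auto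
  next
    fix r assume "r \<in> {(2*lo-1) + int s * 2 | s. s \<le> nat (hi - lo)}"
    then obtain s where s: "r = (2*lo-1) + int s * 2" "s \<le> nat (hi - lo)" by auto
    then show "r \<in> {r. \<exists>p. lo \<le> p \<and> p \<le> hi \<and> r = 2*p-1}"
      using a by (intro CollectI exI[of _ "lo + int s"]) auto
  qed
  then show ?thesis unfolding is_segment_def by blast
qed

lemma par_lt: fixes x y q N :: int  assumes "odd (x - y)" "even (q - y)"
  shows "odd N \<Longrightarrow> (x - N < q) \<longleftrightarrow> (x - N + 2 \<le> q)" using assms by presburger

lemma row_seg: "1 \<le> j \<Longrightarrow> j \<le> 2*n-2 \<Longrightarrow> is_segment 4 {r. \<exists>q. r = 2*q \<and> (j,q) \<in> Ihat n \<xi>}"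
proof -
  assume a: "1 \<le> j" "j \<le> 2*n-2"
  let ?lo = "\<xi> (2*n-1-j) - (2*int n - 1) + 2"
  have d: "odd (\<xi> (2*n-1-j) - \<xi> j)" "\<bar>\<xi> (2*n-1-j) - \<xi> j\<bar> \<le> 2*int n - 3" using dual a by auto
  have "{r. \<exists>q. r = 2*q \<and> (j,q) \<in> Ihat n \<xi>} = {r. \<exists>q. r = 2*q \<and> even (q - \<xi> j) \<and> ?lo \<le> q \<and> q \<le> \<xi> j}"
  proof -
    have pt: "(j,q) \<in> Ihat n \<xi> \<longleftrightarrow> even (q - \<xi> j) \<and> ?lo \<le> q \<and> q \<le> \<xi> j" for q
    proof -
      have "(j,q) \<in> Ihat n \<xi> \<longleftrightarrow> even (q - \<xi> j) \<and> \<xi> (2*n-1-j) - (2*int n - 1) < q \<and> q \<le> \<xi> j"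
        using a by (simp add: Ihat_iff)
      moreover have "even (q - \<xi> j) \<Longrightarrow> (\<xi> (2*n-1-j) - (2*int n - 1) < q \<longleftrightarrow> ?lo \<le> q)"
        using par_lt[OF d(1), of q "2*int n - 1"] by simp
      ultimately show ?thesis by blast
    qed
    then show ?thesis by blast
  qed
  moreover have "?lo \<le> \<xi> j" "even (\<xi> j - ?lo)" using d by auto
  ultimately show ?thesis using seg4[of ?lo "\<xi> j"] by simp
qed

lemma part0: "\<forall>\<iota> \<in> {1..2*n-1}. is_segment (if \<iota> = n then 2 else 4) {r. (\<iota>, r) \<in> Itw n \<xi> b}"
proof
  fix \<iota> assume i: "\<iota> \<in> {1..2*n-1}"
  show "is_segment (if \<iota> = n then 2 else 4) {r. (\<iota>, r) \<in> Itw n \<xi> b}"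
  proof (cases "\<iota> = n")
    case True
    have nophi: "\<not> ((j,q) \<in> Ihat n \<xi> \<and> (n,s) = dbl (phi n (j,q)))" for j q s
      using Ihat_range[of j q] n2 unfolding dbl_def phi_def by auto
    have rr: "rM n \<xi> - rm n \<xi> = 2*int n - 2" unfolding rM_eq rm_eq by simp
    have rowI: "(n, r) \<in> Itw n \<xi> b \<longleftrightarrow> (\<exists>p. rm n \<xi> + 1 \<le> p \<and> p \<le> rM n \<xi> \<and> r = 2*p-1) \<or> r = E b" for r
      using nophi[of _ _ r] unfolding Itw_iff by blast
    show ?thesis
    proof (cases b)
      case Gt
      have "{r. (\<iota>, r) \<in> Itw n \<xi> b} = {r. \<exists>p. rm n \<xi> + 1 \<le> p \<and> p \<le> rM n \<xi> + 1 \<and> r = 2*p-1}"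
      proof (intro set_eqI iffI)
        fix r assume "r \<in> {r. (\<iota>, r) \<in> Itw n \<xi> b}"
        then have "(\<exists>p. rm n \<xi> + 1 \<le> p \<and> p \<le> rM n \<xi> \<and> r = 2*p-1) \<or> r = 2 * rM n \<xi> + 1"
          using rowI True Gt unfolding E_def by simp
        then show "r \<in> {r. \<exists>p. rm n \<xi> + 1 \<le> p \<and> p \<le> rM n \<xi> + 1 \<and> r = 2*p-1}"
        proof (elim disjE exE conjE)
          assume "r = 2 * rM n \<xi> + 1"
          then show ?thesis using rr n2 by (intro CollectI exI[of _ "rM n \<xi> + 1"]) auto
        qed auto
      next
        fix r assume "r \<in> {r. \<exists>p. rm n \<xi> + 1 \<le> p \<and> p \<le> rM n \<xi> + 1 \<and> r = 2*p-1}"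
        then obtain p where p: "rm n \<xi> + 1 \<le> p" "p \<le> rM n \<xi> + 1" "r = 2*p-1" by blast
        then have "(\<exists>p. rm n \<xi> + 1 \<le> p \<and> p \<le> rM n \<xi> \<and> r = 2*p-1) \<or> r = 2 * rM n \<xi> + 1"
          by (cases "p = rM n \<xi> + 1") auto
        then show "r \<in> {r. (\<iota>, r) \<in> Itw n \<xi> b}" using rowI True Gt unfolding E_def by simp
      qed
      moreover have "rm n \<xi> + 1 \<le> rM n \<xi> + 1" using rr n2 by simp
      ultimately show ?thesis using seg2 True by simp
    next
      case Lt
      have "{r. (\<iota>, r) \<in> Itw n \<xi> b} = {r. \<exists>p. rm n \<xi> \<le> p \<and> p \<le> rM n \<xi> \<and> r = 2*p-1}"
      proof (intro set_eqI iffI)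
        fix r assume "r \<in> {r. (\<iota>, r) \<in> Itw n \<xi> b}"
        then have "(\<exists>p. rm n \<xi> + 1 \<le> p \<and> p \<le> rM n \<xi> \<and> r = 2*p-1) \<or> r = 2 * rm n \<xi> - 1"
          using rowI True Lt unfolding E_def by simp
        then show "r \<in> {r. \<exists>p. rm n \<xi> \<le> p \<and> p \<le> rM n \<xi> \<and> r = 2*p-1}"
        proof (elim disjE exE conjE)
          assume "r = 2 * rm n \<xi> - 1"
          then show ?thesis using rr n2 by (intro CollectI exI[of _ "rm n \<xi>"]) auto
        qed auto
      next
        fix r assume "r \<in> {r. \<exists>p. rm n \<xi> \<le> p \<and> p \<le> rM n \<xi> \<and> r = 2*p-1}"
        then obtain p where p: "rm n \<xi> \<le> p" "p \<le> rM n \<xi>" "r = 2*p-1" by blast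
        then have "(\<exists>p. rm n \<xi> + 1 \<le> p \<and> p \<le> rM n \<xi> \<and> r = 2*p-1) \<or> r = 2 * rm n \<xi> - 1"
          by (cases "p = rm n \<xi>") auto
        then show "r \<in> {r. (\<iota>, r) \<in> Itw n \<xi> b}" using rowI True Lt unfolding E_def by simp
      qed
      moreover have "rm n \<xi> \<le> rM n \<xi>" using rr n2 by simp
      ultimately show ?thesis using seg2 True by simp
    qed
  next
    case False
    define j where "j = (if \<iota> \<le> n - 1 then \<iota> else \<iota> - 1)"
    have j: "1 \<le> j" "j \<le> 2*n-2" using i False n2 unfolding j_def by auto
    have key: "(j',q) \<in> Ihat n \<xi> \<Longrightarrow> (\<iota>, r) = dbl (phi n (j',q)) \<longleftrightarrow> (j' = j \<and> r = 2*q)" for j' q r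
      using Ihat_range[of j' q] False i n2 unfolding j_def dbl_def phi_def by auto
    have "(\<iota>, r) \<in> Itw n \<xi> b \<longleftrightarrow> (\<exists>j' q. (j',q) \<in> Ihat n \<xi> \<and> (\<iota>,r) = dbl (phi n (j',q)))" for r
      using False unfolding Itw_iff by simp
    then have "{r. (\<iota>, r) \<in> Itw n \<xi> b} = {r. \<exists>q. r = 2*q \<and> (j,q) \<in> Ihat n \<xi>}"
      using key by blast
    then show ?thesis using row_seg[OF j] False by simp
  qed
qed


lemma rho_range: "1 \<le> j \<Longrightarrow> j \<le> 2*n-2 \<Longrightarrow> 1 \<le> rho j \<and> rho j \<le> n-1"
  unfolding rho_def using n2 by auto

lemma rho_inv: "1 \<le> j \<Longrightarrow> j \<le> 2*n-2 \<Longrightarrow> rho j = a \<Longrightarrow> j = a \<or> j = 2*n-1-a"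
  unfolding rho_def using n2 by auto

lemma rho_adj: "1 \<le> j \<Longrightarrow> j \<le> 2*n-2 \<Longrightarrow> 1 \<le> i' \<Longrightarrow> i' \<le> 2*n-2 \<Longrightarrow> (i' = j+1 \<or> j = i'+1) \<Longrightarrow> rho j \<le> n-2
   \<Longrightarrow> rho i' = rho j + 1 \<or> rho i' + 1 = rho j"
  unfolding rho_def using n2 by auto

lemma same_row: "(j1,q) \<in> Ihat n \<xi> \<Longrightarrow> (j2,q+2) \<in> Ihat n \<xi> \<Longrightarrow> rho j1 = rho j2 \<Longrightarrow> j1 = j2"
proof (rule ccontr)
  assume a: "(j1,q) \<in> Ihat n \<xi>" "(j2,q+2) \<in> Ihat n \<xi>" "rho j1 = rho j2" "j1 \<noteq> j2"
  have r1: "1 \<le> j1" "j1 \<le> 2*n-2" "1 \<le> j2" "j2 \<le> 2*n-2" using a Ihat_range by auto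
  define c where "c = rho j1"
  have c: "j1 = c \<or> j1 = 2*n-1-c" "j2 = c \<or> j2 = 2*n-1-c" "c \<le> n-1"
    using rho_inv[OF r1(3,4), of c] rho_inv[OF r1(1,2), of c] a(3) rho_range[OF r1(1,2)] unfolding c_def by auto
  have "j2 = 2*n-1-j1" using c a(4) by arith
  moreover have "even (q - \<xi> j1)" "even (q + 2 - \<xi> j2)" using a by (auto simp: Ihat_iff)
  ultimately show False using dual[OF r1(1,2)] by presburger
qed

lemma Ibar_low: "a \<noteq> n \<Longrightarrow> (a, s) \<in> Ibar n \<xi> b \<longleftrightarrow> (\<exists>j q. (j,q) \<in> Ihat n \<xi> \<and> a = rho j \<and> s = 2*q)"
  unfolding Ibar_iff by auto

lemma part1: assumes i: "i \<le> n - 2" and m1: "(i, r - 2) \<in> Ibar n \<xi> b" and m2: "(i, r + 2) \<in> Ibar n \<xi> b"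
  shows "(i + 1, r) \<in> Ibar n \<xi> b \<and> (i \<ge> 2 \<longrightarrow> (i - 1, r) \<in> Ibar n \<xi> b)
        \<and> {y. ((i, r - 2), y) \<in> Abar n \<xi> b} = {(k, r) | k. k \<in> {i - 1, i + 1} \<and> k \<ge> 1}
        \<and> {x. (x, (i, r + 2)) \<in> Abar n \<xi> b} = {(k, r) | k. k \<in> {i - 1, i + 1} \<and> k \<ge> 1}"
proof -
  have inn: "i \<noteq> n" "i \<noteq> n - 1" using i n2 by auto
  obtain j1 q1 where h1: "(j1,q1) \<in> Ihat n \<xi>" "i = rho j1" "r - 2 = 2*q1" using m1 Ibar_low[OF inn(1)] by blast
  obtain j2 q2 where h2: "(j2,q2) \<in> Ihat n \<xi>" "i = rho j2" "r + 2 = 2*q2" using m2 Ibar_low[OF inn(1)] by blast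
  define p where "p = q1 + 1"
  have q2: "q2 = q1 + 2" using h1(3) h2(3) by simp
  have "(j2, q1+2) \<in> Ihat n \<xi>" using h2(1) q2 by simp
  moreover have "rho j1 = rho j2" using h1(2) h2(2) by simp
  ultimately have jj: "j1 = j2" using same_row[OF h1(1)] by blast
  define j where "j = j1"
  have jr: "1 \<le> j" "j \<le> 2*n-2" using h1 Ihat_range unfolding j_def by auto
  have pp: "p - 1 = q1" "p + 1 = q1 + 2" unfolding p_def by simp_all
  have P1: "(j, p-1) \<in> Ihat n \<xi>" "(j, p+1) \<in> Ihat n \<xi>" unfolding pp j_def using h1(1) \<open>(j2, q1+2) \<in> Ihat n \<xi>\<close> jj by simp_all
  have rp: "r = 2*p" using h1 unfolding p_def by simp
  have ij: "rho j = i" using h1 unfolding j_def by simp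
  have jcase: "j \<le> n-2 \<or> j \<ge> n+1" using ij i n2 jr unfolding rho_def by (auto split: if_splits)
  have key: "\<exists>i'. (i',p) \<in> Ihat n \<xi> \<and> (i' = j+1 \<or> j = i'+1) \<and> rho i' = k \<and> \<not> ({i',j} = {n-1,n})"
    if k: "k \<in> {i - 1, i + 1}" "k \<ge> 1" for k
  proof -
    consider "j \<le> n-2" "k = i+1" | "j \<le> n-2" "k = i-1" | "j \<ge> n+1" "k = i+1" | "j \<ge> n+1" "k = i-1"
      using jcase k by auto
    then show ?thesis
    proof cases
      case 1
      have "(j+1,p) \<in> Ihat n \<xi>" using mesh_up[OF P1] 1 n2 by simp
      then show ?thesis using 1 ij n2 pair_eq unfolding rho_def by (intro exI[of _ "j+1"]) auto
    next
      case 2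
      have jeq: "j = i" using 2 ij n2 unfolding rho_def by (auto split: if_splits)
      have j2: "2 \<le> j" using jeq 2 k by auto
      have "(j-1,p) \<in> Ihat n \<xi>" using mesh_dn[OF P1 j2] .
      moreover have "rho (j-1) = k" using jeq 2 j2 n2 unfolding rho_def by auto
      moreover have "j = (j-1)+1" using j2 by simp
      moreover have "\<not>({j-1,j} = {n-1,n})" using 2 n2 pair_eq by auto
      ultimately show ?thesis by blast
    next
      case 3
      have "(j-1,p) \<in> Ihat n \<xi>" using mesh_dn[OF P1] 3 n2 by simp
      then show ?thesis using 3 k ij n2 jr pair_eq unfolding rho_def by (intro exI[of _ "j-1"]) auto
    next
      case 4
      have jeq: "i = 2*n-1-j" using 4 ij n2 unfolding rho_def by (auto split: if_splits)
      have j2: "j + 1 \<le> 2*n-2" using jeq 4 k jr by auto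
      have "(j+1,p) \<in> Ihat n \<xi>" using mesh_up[OF P1 j2] .
      moreover have "rho (j+1) = k" using jeq 4 j2 n2 unfolding rho_def by auto
      moreover have "\<not>({j+1,j} = {n-1,n})" using 4 n2 pair_eq by auto
      ultimately show ?thesis by blast
    qed
  qed
  have memb: "(k, r) \<in> Ibar n \<xi> b" if km: "k \<in> {i - 1, i + 1}" "k \<ge> 1" for k
  proof -
    obtain i' where "(i',p) \<in> Ihat n \<xi>" "rho i' = k" using key[OF km] by blast
    then show ?thesis unfolding Ibar_iff rp by auto
  qed
  have out: "{y. ((i, r - 2), y) \<in> Abar n \<xi> b} = {(k, r) | k. k \<in> {i - 1, i + 1} \<and> k \<ge> 1}"
  proof (intro set_eqI iffI)
    fix y assume "y \<in> {y. ((i, r - 2), y) \<in> Abar n \<xi> b}"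
    then have "ArrR b (i, r-2) y" using Abar_iff by simp
    then obtain j' i' q where a: "(j',q) \<in> Ihat n \<xi>" "(i',q+1) \<in> Ihat n \<xi>" "i' = j'+1 \<or> j' = i'+1"
        "(i, r-2) = (rho j', 2*q)" "y = (rho i', 2*q+2)"
      unfolding ArrR_def using inn by auto
    have "rho i' = rho j' + 1 \<or> rho i' + 1 = rho j'" "1 \<le> rho i'"
      using rho_adj[of j' i'] rho_range[of i'] a Ihat_range i by auto
    then show "y \<in> {(k, r) | k. k \<in> {i - 1, i + 1} \<and> k \<ge> 1}" using a rp by auto
  next
    fix y assume "y \<in> {(k, r) | k. k \<in> {i - 1, i + 1} \<and> k \<ge> 1}"
    then obtain k where k: "k \<in> {i - 1, i + 1}" "k \<ge> 1" "y = (k, r)" by blast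
    obtain i' where "(i',p) \<in> Ihat n \<xi>" "(i' = j+1 \<or> j = i'+1)" "rho i' = k" "\<not> ({i',j} = {n-1,n})"
      using key[OF k(1,2)] by blast
    then have "ArrR b (i, r-2) y" unfolding ArrR_def using P1 ij k rp
      by (intro disjI1 exI[of _ j] exI[of _ i'] exI[of _ "p-1"]) auto
    then show "y \<in> {y. ((i, r - 2), y) \<in> Abar n \<xi> b}" using Abar_iff by simp
  qed
  have inc: "{x. (x, (i, r + 2)) \<in> Abar n \<xi> b} = {(k, r) | k. k \<in> {i - 1, i + 1} \<and> k \<ge> 1}"
  proof (intro set_eqI iffI)
    fix x assume "x \<in> {x. (x, (i, r + 2)) \<in> Abar n \<xi> b}"
    then have "ArrR b x (i, r+2)" using Abar_iff by simp
    then obtain j' i' q where a: "(j',q) \<in> Ihat n \<xi>" "(i',q+1) \<in> Ihat n \<xi>" "i' = j'+1 \<or> j' = i'+1"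
        "x = (rho j', 2*q)" "(i, r+2) = (rho i', 2*q+2)"
      unfolding ArrR_def using inn by auto
    have "rho j' = rho i' + 1 \<or> rho j' + 1 = rho i'" "1 \<le> rho j'"
      using rho_adj[of i' j'] rho_range[of j'] a Ihat_range i by auto
    then show "x \<in> {(k, r) | k. k \<in> {i - 1, i + 1} \<and> k \<ge> 1}" using a rp by auto
  next
    fix x assume "x \<in> {(k, r) | k. k \<in> {i - 1, i + 1} \<and> k \<ge> 1}"
    then obtain k where k: "k \<in> {i - 1, i + 1}" "k \<ge> 1" "x = (k, r)" by blast
    obtain i' where "(i',p) \<in> Ihat n \<xi>" "(i' = j+1 \<or> j = i'+1)" "rho i' = k" "\<not> ({i',j} = {n-1,n})"
      using key[OF k(1,2)] by blast
    then have "ArrR b x (i, r+2)" unfolding ArrR_def using P1 ij k rp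
      by (intro disjI1 exI[of _ i'] exI[of _ j] exI[of _ p]) (auto simp: insert_commute)
    then show "x \<in> {x. (x, (i, r + 2)) \<in> Abar n \<xi> b}" using Abar_iff by simp
  qed
  show ?thesis using memb out inc by auto
qed

lemma ArrR_cases:
  assumes "ArrR b u w"
  obtains (c1) j i q where "(j,q) \<in> Ihat n \<xi>" "(i,q+1) \<in> Ihat n \<xi>" "i = j+1 \<or> j = i+1" "\<not> ({i,j} = {n-1,n})"
        "u = (rho j, 2*q)" "w = (rho i, 2*q+2)"
    | (c2) p where "rm n \<xi> + 1 \<le> p" "p \<le> rM n \<xi>" "u = (n-1, 2*p-2)" "w = (n, 2*p-1)"
    | (c3) p where "rm n \<xi> + 1 \<le> p" "p \<le> rM n \<xi>" "u = (n, 2*p-1)" "w = (n-1, 2*p)"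
    | (c4) "b = Gt" "u = (n-1, 2 * rM n \<xi>)" "w = (n, 2 * rM n \<xi> + 1)"
    | (c5) "b = Lt" "u = (n, 2 * rm n \<xi> - 1)" "w = (n-1, 2 * rm n \<xi>)"
  using assms unfolding ArrR_def by blast

lemma conv2: "j' \<in> {n-1,n} \<Longrightarrow> 1 \<le> i' \<Longrightarrow> i' \<le> 2*n-2 \<Longrightarrow> (i' = j'+1 \<or> j' = i'+1) \<Longrightarrow> \<not> ({i',j'} = {n-1,n})
   \<Longrightarrow> rho i' = n-2 \<and> 1 \<le> n-2"
  unfolding pair_eq rho_def using n2 by auto

lemma rr: "rM n \<xi> - rm n \<xi> = 2*int n - 2" unfolding rM_eq rm_eq by simp

lemma part2: assumes m1: "(n - 1, r - 2) \<in> Ibar n \<xi> b" and m2: "(n - 1, r + 2) \<in> Ibar n \<xi> b"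
  shows "(n - 2 \<ge> 1 \<longrightarrow> (n - 2, r) \<in> Ibar n \<xi> b)
        \<and> (n, r - 1) \<in> Ibar n \<xi> b \<and> (n, r + 1) \<in> Ibar n \<xi> b
        \<and> {y. ((n - 1, r - 2), y) \<in> Abar n \<xi> b} = {(k, r) | k. k = n - 2 \<and> k \<ge> 1} \<union> {(n, r - 1)}
        \<and> {x. (x, (n - 1, r + 2)) \<in> Abar n \<xi> b} = {(k, r) | k. k = n - 2 \<and> k \<ge> 1} \<union> {(n, r + 1)}"
proof -
  have inn: "n - 1 \<noteq> n" using n2 by auto
  obtain j1 q1 where h1: "(j1,q1) \<in> Ihat n \<xi>" "n - 1 = rho j1" "r - 2 = 2*q1" using m1 Ibar_low[OF inn] by blast
  obtain j2 q2 where h2: "(j2,q2) \<in> Ihat n \<xi>" "n - 1 = rho j2" "r + 2 = 2*q2" using m2 Ibar_low[OF inn] by blast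
  define p where "p = q1 + 1"
  have q2: "q2 = q1 + 2" using h1(3) h2(3) by simp
  have "(j2, q1+2) \<in> Ihat n \<xi>" using h2(1) q2 by simp
  moreover have "rho j1 = rho j2" using h1(2) h2(2) by simp
  ultimately have jj: "j1 = j2" using same_row[OF h1(1)] by blast
  define j where "j = j1"
  have jr: "1 \<le> j" "j \<le> 2*n-2" using h1 Ihat_range unfolding j_def by auto
  have pp: "p - 1 = q1" "p + 1 = q1 + 2" unfolding p_def by simp_all
  have P1: "(j, p-1) \<in> Ihat n \<xi>" "(j, p+1) \<in> Ihat n \<xi>" unfolding pp j_def using h1(1) \<open>(j2, q1+2) \<in> Ihat n \<xi>\<close> jj by simp_all
  have rp: "r = 2*p" using h1 unfolding p_def by simp
  have ij: "rho j = n - 1" using h1 unfolding j_def by simp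
  have jn: "j = n - 1 \<or> j = n" using rho_inv[OF jr ij] n2 by auto
  have Sr: "rm n \<xi> \<le> p - 1" "p + 1 \<le> rM n \<xi>"
    using S_iff[of "p-1"] S_iff[of "p+1"] P1 jn unfolding rm_eq rM_eq by auto
  have key2: "\<exists>i'. (i',p) \<in> Ihat n \<xi> \<and> (i' = j+1 \<or> j = i'+1) \<and> rho i' = n-2 \<and> \<not> ({i',j} = {n-1,n})"
    if n3: "n - 2 \<ge> 1"
  proof (cases "j = n - 1")
    case True
    have j2: "2 \<le> j" using True n3 by simp
    have "(j-1,p) \<in> Ihat n \<xi>" using mesh_dn[OF P1 j2] .
    moreover have "rho (j-1) = n-2" using True n3 unfolding rho_def by auto
    moreover have "j = (j-1)+1" using j2 by simp
    moreover have "\<not>({j-1,j} = {n-1,n})" using True n3 pair_eq by auto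
    ultimately show ?thesis by blast
  next
    case False
    then have jn': "j = n" using jn by simp
    have j2: "j + 1 \<le> 2*n-2" using jn' n3 by simp
    have "(j+1,p) \<in> Ihat n \<xi>" using mesh_up[OF P1 j2] .
    moreover have "rho (j+1) = n-2" using jn' n3 unfolding rho_def by auto
    moreover have "\<not>({j+1,j} = {n-1,n})" using jn' n3 pair_eq by auto
    ultimately show ?thesis by blast
  qed
  have C1: "n - 2 \<ge> 1 \<longrightarrow> (n - 2, r) \<in> Ibar n \<xi> b"
  proof
    assume "n - 2 \<ge> 1"
    then obtain i' where "(i',p) \<in> Ihat n \<xi>" "rho i' = n-2" using key2 by blast
    then show "(n - 2, r) \<in> Ibar n \<xi> b" unfolding Ibar_iff rp by auto
  qed
  have C2: "(n, r - 1) \<in> Ibar n \<xi> b" unfolding Ibar_iff using Sr rp by (intro disjI2 disjI1 conjI refl exI[of _ p]) auto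
  have C3: "(n, r + 1) \<in> Ibar n \<xi> b" unfolding Ibar_iff using Sr rp by (intro disjI2 disjI1 conjI refl exI[of _ "p+1"]) auto
  have out: "{y. ((n - 1, r - 2), y) \<in> Abar n \<xi> b} = {(k, r) | k. k = n - 2 \<and> k \<ge> 1} \<union> {(n, r - 1)}"
  proof (intro set_eqI iffI)
    fix y assume "y \<in> {y. ((n - 1, r - 2), y) \<in> Abar n \<xi> b}"
    then have "ArrR b (n - 1, r-2) y" using Abar_iff by simp
    then show "y \<in> {(k, r) | k. k = n - 2 \<and> k \<ge> 1} \<union> {(n, r - 1)}"
    proof (cases rule: ArrR_cases)
      case (c1 j' i' q)
      have "j' \<in> {n-1,n}" using rho_inv[of j' "n-1"] c1 Ihat_range[of j' q] n2 by auto
      then have "rho i' = n-2 \<and> 1 \<le> n-2" using conv2[of j' i'] c1 Ihat_range[of i' "q+1"] by auto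
      then show ?thesis using c1 rp by auto
    next
      case (c2 p')
      then show ?thesis using rp by auto
    next
      case (c4)
      then show ?thesis using rp Sr by auto
    qed (use inn in auto)
  next
    fix y assume "y \<in> {(k, r) | k. k = n - 2 \<and> k \<ge> 1} \<union> {(n, r - 1)}"
    then consider "n - 2 \<ge> 1" "y = (n-2, r)" | "y = (n, r-1)" by blast
    then have "ArrR b (n - 1, r-2) y"
    proof cases
      case 1
      then obtain i' where "(i',p) \<in> Ihat n \<xi>" "(i' = j+1 \<or> j = i'+1)" "rho i' = n-2" "\<not> ({i',j} = {n-1,n})"
        using key2 by blast
      then show ?thesis unfolding ArrR_def using P1 ij 1 rp
        by (intro disjI1 exI[of _ j] exI[of _ i'] exI[of _ "p-1"]) auto
    next
      case 2
      then show ?thesis unfolding ArrR_def using Sr rp by (intro disjI2 disjI1 exI[of _ p]) auto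
    qed
    then show "y \<in> {y. ((n - 1, r - 2), y) \<in> Abar n \<xi> b}" using Abar_iff by simp
  qed
  have inc: "{x. (x, (n - 1, r + 2)) \<in> Abar n \<xi> b} = {(k, r) | k. k = n - 2 \<and> k \<ge> 1} \<union> {(n, r + 1)}"
  proof (intro set_eqI iffI)
    fix x assume "x \<in> {x. (x, (n - 1, r + 2)) \<in> Abar n \<xi> b}"
    then have "ArrR b x (n - 1, r + 2)" using Abar_iff by simp
    then show "x \<in> {(k, r) | k. k = n - 2 \<and> k \<ge> 1} \<union> {(n, r + 1)}"
    proof (cases rule: ArrR_cases)
      case (c1 j' i' q)
      have "i' \<in> {n-1,n}" using rho_inv[of i' "n-1"] c1 Ihat_range[of i' "q+1"] n2 by auto
      moreover have "\<not> ({j',i'} = {n-1,n})" using c1 by (simp add: insert_commute)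
      ultimately have "rho j' = n-2 \<and> 1 \<le> n-2" using conv2[of i' j'] c1 Ihat_range[of j' q] by auto
      then show ?thesis using c1 rp by auto
    next
      case (c3 p')
      then show ?thesis using rp by auto
    next
      case (c5)
      then show ?thesis using rp Sr by auto
    qed (use inn in auto)
  next
    fix x assume "x \<in> {(k, r) | k. k = n - 2 \<and> k \<ge> 1} \<union> {(n, r + 1)}"
    then consider "n - 2 \<ge> 1" "x = (n-2, r)" | "x = (n, r+1)" by blast
    then have "ArrR b x (n - 1, r + 2)"
    proof cases
      case 1
      then obtain i' where "(i',p) \<in> Ihat n \<xi>" "(i' = j+1 \<or> j = i'+1)" "rho i' = n-2" "\<not> ({i',j} = {n-1,n})"
        using key2 by blast
      then show ?thesis unfolding ArrR_def using P1 ij 1 rp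
        by (intro disjI1 exI[of _ i'] exI[of _ j] exI[of _ p]) (auto simp: insert_commute)
    next
      case 2
      then show ?thesis unfolding ArrR_def using Sr rp by (intro disjI2 disjI2 disjI1 exI[of _ "p+1"]) auto
    qed
    then show "x \<in> {x. (x, (n - 1, r + 2)) \<in> Abar n \<xi> b}" using Abar_iff by simp
  qed
  show ?thesis using C1 C2 C3 out inc by blast
qed

lemma Ibar_n: "(n, s) \<in> Ibar n \<xi> b \<longleftrightarrow> (\<exists>p. rm n \<xi> + 1 \<le> p \<and> p \<le> rM n \<xi> \<and> s = 2*p-1) \<or> s = E b"
proof -
  have "\<not> (\<exists>j q. (j,q) \<in> Ihat n \<xi> \<and> n = rho j \<and> s = 2*q)"
    using rho_range Ihat_range n2 by fastforce
  then show ?thesis unfolding Ibar_iff by blast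
qed

lemma part3: assumes m1: "(n, r - 1) \<in> Ibar n \<xi> b" and m2: "(n, r + 1) \<in> Ibar n \<xi> b"
  shows "(n - 1, r) \<in> Ibar n \<xi> b
        \<and> {y. ((n, r - 1), y) \<in> Abar n \<xi> b} = {(n - 1, r)}
        \<and> {x. (x, (n, r + 1)) \<in> Abar n \<xi> b} = {(n - 1, r)}"
proof -
  have inn: "n - 1 \<noteq> n" using n2 by auto
  have R: "rM n \<xi> - rm n \<xi> = 2*int n - 2" "2*int n - 2 \<ge> 2" using rr n2 by auto
  have A: "(\<exists>p1. rm n \<xi> + 1 \<le> p1 \<and> p1 \<le> rM n \<xi> \<and> r = 2*p1) \<or> (b = Gt \<and> r = 2 * rM n \<xi> + 2) \<or> (b = Lt \<and> r = 2 * rm n \<xi>)"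
    using m1 unfolding Ibar_n E_def by (cases b) auto
  have B: "(\<exists>p2. rm n \<xi> + 1 \<le> p2 \<and> p2 \<le> rM n \<xi> \<and> r = 2*p2 - 2) \<or> (b = Gt \<and> r = 2 * rM n \<xi>) \<or> (b = Lt \<and> r = 2 * rm n \<xi> - 2)"
    using m2 unfolding Ibar_n E_def by (cases b) auto
  have "even r" using A by auto
  then obtain p where rp: "r = 2*p" by (rule evenE)
  have A': "(rm n \<xi> + 1 \<le> p \<and> p \<le> rM n \<xi>) \<or> (b = Gt \<and> p = rM n \<xi> + 1) \<or> (b = Lt \<and> p = rm n \<xi>)"
    using A rp by auto
  have B': "(rm n \<xi> \<le> p \<and> p \<le> rM n \<xi> - 1) \<or> (b = Gt \<and> p = rM n \<xi>) \<or> (b = Lt \<and> p = rm n \<xi> - 1)"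
    using B rp by auto
  have outc: "(rm n \<xi> + 1 \<le> p \<and> p \<le> rM n \<xi>) \<or> (b = Lt \<and> p = rm n \<xi>)"
    using A' B' R by (cases b) auto
  have incc: "(rm n \<xi> \<le> p \<and> p \<le> rM n \<xi> - 1) \<or> (b = Gt \<and> p = rM n \<xi>)"
    using A' B' R by (cases b) auto
  have pr: "M - (2*int n - 2) \<le> p" "p \<le> M" using outc R unfolding rm_eq rM_eq by auto
  have C1: "(n - 1, r) \<in> Ibar n \<xi> b"
  proof -
    obtain k where k: "(k, p) \<in> Ihat n \<xi>" "k \<in> {n-1, n}" using S_iff[of p] pr by auto
    then have "rho k = n - 1" using rho_n by auto
    then show ?thesis unfolding Ibar_iff using k rp by auto
  qed
  have out: "{y. ((n, r - 1), y) \<in> Abar n \<xi> b} = {(n - 1, r)}"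
  proof (intro set_eqI iffI)
    fix y assume "y \<in> {y. ((n, r - 1), y) \<in> Abar n \<xi> b}"
    then have "ArrR b (n, r - 1) y" using Abar_iff by simp
    then show "y \<in> {(n - 1, r)}"
    proof (cases rule: ArrR_cases)
      case (c1 j' i' q)
      then show ?thesis using rho_range[of j'] Ihat_range[of j' q] n2 by auto
    next
      case (c3 p')
      then show ?thesis using rp by auto
    next
      case (c5)
      then show ?thesis using rp by auto
    qed (use inn in auto)
  next
    fix y assume "y \<in> {(n - 1, r)}"
    then have y: "y = (n-1, r)" by simp
    have "ArrR b (n, r - 1) y" using outc
    proof
      assume "rm n \<xi> + 1 \<le> p \<and> p \<le> rM n \<xi>"
      then show ?thesis unfolding ArrR_def using y rp by (intro disjI2 disjI2 disjI1 exI[of _ p]) auto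
    next
      assume "b = Lt \<and> p = rm n \<xi>"
      then show ?thesis unfolding ArrR_def using y rp by auto
    qed
    then show "y \<in> {y. ((n, r - 1), y) \<in> Abar n \<xi> b}" using Abar_iff by simp
  qed
  have inc: "{x. (x, (n, r + 1)) \<in> Abar n \<xi> b} = {(n - 1, r)}"
  proof (intro set_eqI iffI)
    fix x assume "x \<in> {x. (x, (n, r + 1)) \<in> Abar n \<xi> b}"
    then have "ArrR b x (n, r + 1)" using Abar_iff by simp
    then show "x \<in> {(n - 1, r)}"
    proof (cases rule: ArrR_cases)
      case (c1 j' i' q)
      then show ?thesis using rho_range[of i'] Ihat_range[of i' "q+1"] n2 by auto
    next
      case (c2 p')
      then show ?thesis using rp by auto
    next
      case (c4)
      then show ?thesis using rp by auto
    qed (use inn in auto)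
  next
    fix x assume "x \<in> {(n - 1, r)}"
    then have x: "x = (n-1, r)" by simp
    have "ArrR b x (n, r + 1)" using incc
    proof
      assume "rm n \<xi> \<le> p \<and> p \<le> rM n \<xi> - 1"
      then show ?thesis unfolding ArrR_def using x rp by (intro disjI2 disjI1 exI[of _ "p+1"]) auto
    next
      assume "b = Gt \<and> p = rM n \<xi>"
      then show ?thesis unfolding ArrR_def using x rp by auto
    qed
    then show "x \<in> {x. (x, (n, r + 1)) \<in> Abar n \<xi> b}" using Abar_iff by simp
  qed
  show ?thesis using C1 out inc by blast
qed

end

theorem lemma3p22:
  fixes n :: nat and \<xi> :: "nat \<Rightarrow> int" and b :: flat
  assumes "n \<ge> 2" and "is_height n \<xi>"
  shows "(\<forall>\<iota> \<in> {1..2*n-1}. is_segment (if \<iota> = n then 2 else 4) {r. (\<iota>, r) \<in> Itw n \<xi> b})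
   \<and> (\<forall>i r. i \<le> n - 2 \<and> (i, r - 2) \<in> Ibar n \<xi> b \<and> (i, r + 2) \<in> Ibar n \<xi> b \<longrightarrow>
        (i + 1, r) \<in> Ibar n \<xi> b \<and> (i \<ge> 2 \<longrightarrow> (i - 1, r) \<in> Ibar n \<xi> b)
        \<and> {y. ((i, r - 2), y) \<in> Abar n \<xi> b} = {(k, r) | k. k \<in> {i - 1, i + 1} \<and> k \<ge> 1}
        \<and> {x. (x, (i, r + 2)) \<in> Abar n \<xi> b} = {(k, r) | k. k \<in> {i - 1, i + 1} \<and> k \<ge> 1})
   \<and> (\<forall>r. (n - 1, r - 2) \<in> Ibar n \<xi> b \<and> (n - 1, r + 2) \<in> Ibar n \<xi> b \<longrightarrow>
        (n - 2 \<ge> 1 \<longrightarrow> (n - 2, r) \<in> Ibar n \<xi> b)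
        \<and> (n, r - 1) \<in> Ibar n \<xi> b \<and> (n, r + 1) \<in> Ibar n \<xi> b
        \<and> {y. ((n - 1, r - 2), y) \<in> Abar n \<xi> b} = {(k, r) | k. k = n - 2 \<and> k \<ge> 1} \<union> {(n, r - 1)}
        \<and> {x. (x, (n - 1, r + 2)) \<in> Abar n \<xi> b} = {(k, r) | k. k = n - 2 \<and> k \<ge> 1} \<union> {(n, r + 1)})
   \<and> (\<forall>r. (n, r - 1) \<in> Ibar n \<xi> b \<and> (n, r + 1) \<in> Ibar n \<xi> b \<longrightarrow>
        (n - 1, r) \<in> Ibar n \<xi> b
        \<and> {y. ((n, r - 1), y) \<in> Abar n \<xi> b} = {(n - 1, r)}
        \<and> {x. (x, (n, r + 1)) \<in> Abar n \<xi> b} = {(n - 1, r)})"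
proof -
  interpret L n \<xi> using assms by unfold_locales
  have P1: "\<forall>i r. i \<le> n - 2 \<and> (i, r - 2) \<in> Ibar n \<xi> b \<and> (i, r + 2) \<in> Ibar n \<xi> b \<longrightarrow>
        (i + 1, r) \<in> Ibar n \<xi> b \<and> (i \<ge> 2 \<longrightarrow> (i - 1, r) \<in> Ibar n \<xi> b)
        \<and> {y. ((i, r - 2), y) \<in> Abar n \<xi> b} = {(k, r) | k. k \<in> {i - 1, i + 1} \<and> k \<ge> 1}
        \<and> {x. (x, (i, r + 2)) \<in> Abar n \<xi> b} = {(k, r) | k. k \<in> {i - 1, i + 1} \<and> k \<ge> 1}"
    using part1 by blast
  have P2: "\<forall>r. (n - 1, r - 2) \<in> Ibar n \<xi> b \<and> (n - 1, r + 2) \<in> Ibar n \<xi> b \<longrightarrow>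
        (n - 2 \<ge> 1 \<longrightarrow> (n - 2, r) \<in> Ibar n \<xi> b)
        \<and> (n, r - 1) \<in> Ibar n \<xi> b \<and> (n, r + 1) \<in> Ibar n \<xi> b
        \<and> {y. ((n - 1, r - 2), y) \<in> Abar n \<xi> b} = {(k, r) | k. k = n - 2 \<and> k \<ge> 1} \<union> {(n, r - 1)}
        \<and> {x. (x, (n - 1, r + 2)) \<in> Abar n \<xi> b} = {(k, r) | k. k = n - 2 \<and> k \<ge> 1} \<union> {(n, r + 1)}"
    using part2 by blast
  have P3: "\<forall>r. (n, r - 1) \<in> Ibar n \<xi> b \<and> (n, r + 1) \<in> Ibar n \<xi> b \<longrightarrow>
        (n - 1, r) \<in> Ibar n \<xi> b
        \<and> {y. ((n, r - 1), y) \<in> Abar n \<xi> b} = {(n - 1, r)}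
        \<and> {x. (x, (n, r + 1)) \<in> Abar n \<xi> b} = {(n - 1, r)}"
    using part3 by blast
  show ?thesis using part0 P1 P2 P3 by (intro conjI) (assumption+)
qed

end
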